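(* Let $(X,d_X)$ and $(Y,d_Y)$ be compact metric spaces and equip $X\times Y$ with the metric $d((x,y),(x',y'))=d_X(x,x')+d_Y(y,y')$. Let $T:X\times Y\to X\times Y$ be an isometry (onto) such that $\alpha_T(C(X)\otimes1_Y)\subseteq C(X)\otimes1_Y$, where $\alpha_T:C(X\times Y)\to C(X\times Y)$, $\alpha_T(F)=F\circ T$. Then $T$ is a product isometry: there are isometries $h$ of $X$ and $k$ of $Y$ with $T(x,y)=(h(x),k(y))$ for all $(x,y)$. In particular the group of such isometries equals $\mathrm{ISO}(X)\times\mathrm{ISO}(Y)$. *)

theory Defs
  imports "HOL-Analysis.Analysis"
begin

definition sum_dist :: "('a \<Rightarrow> 'a \<Rightarrow> real) \<Rightarrow> ('b \<Rightarrow> 'b \<Rightarrow> real)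
    \<Rightarrow> ('a \<times> 'b) \<Rightarrow> ('a \<times> 'b) \<Rightarrow> real" where
  "sum_dist dX dY p q = dX (fst p) (fst q) + dY (snd p) (snd q)"

definition isometry_onto :: "'a set \<Rightarrow> ('a \<Rightarrow> 'a \<Rightarrow> real) \<Rightarrow> 'b set \<Rightarrow> ('b \<Rightarrow> 'b \<Rightarrow> real)
    \<Rightarrow> ('a \<Rightarrow> 'b) \<Rightarrow> bool" where
  "isometry_onto M d M' d' f \<longleftrightarrow>
     f ` M = M' \<and> (\<forall>x\<in>M. \<forall>y\<in>M. d' (f x) (f y) = d x y)"

text \<open>alpha_T (C(X) \<otimes> 1_Y) \<subseteq> C(X) \<otimes> 1_Y, with complex-valued continuous functions.\<close>
definition preserves_CX :: "'a set \<Rightarrow> ('a \<Rightarrow> 'a \<Rightarrow> real) \<Rightarrow> 'b set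
    \<Rightarrow> ('a \<times> 'b \<Rightarrow> 'a \<times> 'b) \<Rightarrow> bool" where
  "preserves_CX X dX Y T \<longleftrightarrow>
     (\<forall>f :: 'a \<Rightarrow> complex. continuous_map (Metric_space.mtopology X dX) euclidean f \<longrightarrow>
        (\<exists>g :: 'a \<Rightarrow> complex. continuous_map (Metric_space.mtopology X dX) euclidean g \<and>
           (\<forall>x\<in>X. \<forall>y\<in>Y. f (fst (T (x, y))) = g x)))"

end

theory Submission
  imports Defs
begin

lemma self_isometry_onto:
  assumes MS: "Metric_space Y d" and C: "compact_space (Metric_space.mtopology Y d)"
    and fY: "\<And>y. y \<in> Y \<Longrightarrow> f y \<in> Y"
    and iso: "\<And>a b. a \<in> Y \<Longrightarrow> b \<in> Y \<Longrightarrow> d (f a) (f b) = d a b"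
  shows "f ` Y = Y"
proof -
  interpret Y: Metric_space Y d by (rule MS)
  have "b \<in> f ` Y" if b: "b \<in> Y" for b
  proof -
    define s where "s n = (f ^^ n) b" for n
    have sY: "s n \<in> Y" for n by (induction n) (auto simp: s_def fY b)
    have sd: "d (s m) (s (m + k)) = d b (s k)" for m k
    proof (induction m)
      case 0 then show ?case by (simp add: s_def)
    next
      case (Suc m)
      have "d (s (Suc m)) (s (Suc m + k)) = d (f (s m)) (f (s (m+k)))" by (simp add: s_def)
      also have "\<dots> = d (s m) (s (m+k))" using iso sY by blast
      finally show ?case using Suc by simp
    qed
    have A: "\<exists>y\<in>Y. d b (f y) < e" if e: "e > 0" for e
    proof -
      have "Y.mtotally_bounded Y" using C Y.compact_space_eq_mcomplete_mtotally_bounded by blast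
      then obtain r where r: "strict_mono r" "Y.MCauchy (s \<circ> r)"
        using Y.mtotally_bounded_sequentially sY by blast
      have "\<forall>\<epsilon>>0. \<exists>N. \<forall>n n'. N \<le> n \<longrightarrow> N \<le> n' \<longrightarrow> d ((s \<circ> r) n) ((s \<circ> r) n') < \<epsilon>"
        using r(2) unfolding Y.MCauchy_def by (rule conjunct2)
      then obtain N where N0: "\<forall>n n'. N \<le> n \<longrightarrow> N \<le> n' \<longrightarrow> d ((s \<circ> r) n) ((s \<circ> r) n') < e"
        using e by blast
      have N: "d (s (r N)) (s (r (Suc N))) < e" using N0 by simp
      have lt: "r N < r (Suc N)" using r(1) by (simp add: strict_mono_def)
      then obtain k where k: "r (Suc N) = r N + Suc k" using less_iff_Suc_add by auto
      have "d b (s (Suc k)) < e" using N sd[of "r N" "Suc k"] k by simp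
      moreover have "s (Suc k) = f (s k)" by (simp add: s_def)
      ultimately have "d b (f (s k)) < e" by simp
      then show ?thesis using sY[of k] by blast
    qed
    have "\<forall>n. \<exists>y\<in>Y. d b (f y) < 1 / real (Suc n)" using A by simp
    then obtain y where y: "\<And>n. y n \<in> Y" "\<And>n. d b (f (y n)) < 1 / real (Suc n)" by metis
    obtain l r where l: "l \<in> Y" "strict_mono r" "limitin Y.mtopology (y \<circ> r) l sequentially"
      using C Y.compact_space_sequentially y(1) by (metis image_subset_iff)
    have LT: "d b (f l) < e" if e: "e > 0" for e
    proof -
      obtain N1 where N1: "\<And>n. n \<ge> N1 \<Longrightarrow> d (y (r n)) l < e/2"
        using l(3) e unfolding Y.limit_metric_sequentially by (metis comp_apply half_gt_zero)
      obtain N2 where N2: "1 / real (Suc N2) < e/2"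
        by (metis e half_gt_zero nat_approx_posE)
      define n where "n = max N1 N2"
      have "r n \<ge> n" using l(2) by (simp add: strict_mono_imp_increasing)
      hence "1 / real (Suc (r n)) \<le> 1 / real (Suc N2)" unfolding n_def
        by (intro divide_left_mono) auto
      hence a: "d b (f (y (r n))) < e/2" using y(2)[of "r n"] N2 by linarith
      have bb: "d (f (y (r n))) (f l) < e/2" using iso[OF y(1) l(1)] N1[of n] n_def by simp
      have "d b (f l) \<le> d b (f (y (r n))) + d (f (y (r n))) (f l)"
        using Y.triangle b fY y(1) l(1) by blast
      then show ?thesis using a bb by linarith
    qed
    have "\<not> (0 < d b (f l))" using LT[of "d b (f l)"] by blast
    hence "d b (f l) = 0" using Y.nonneg[of b "f l"] by linarith
    hence "b = f l" using Y.zero b fY l(1) by blast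
    then show ?thesis using l(1) by blast
  qed
  then show ?thesis using fY by blast
qed


theorem lemma3p3:
  fixes X :: "'a set" and dX :: "'a \<Rightarrow> 'a \<Rightarrow> real"
    and Y :: "'b set" and dY :: "'b \<Rightarrow> 'b \<Rightarrow> real"
    and T :: "'a \<times> 'b \<Rightarrow> 'a \<times> 'b"
  assumes "Metric_space X dX" and "compact_space (Metric_space.mtopology X dX)"
    and "Metric_space Y dY" and "compact_space (Metric_space.mtopology Y dY)"
    and "isometry_onto (X \<times> Y) (sum_dist dX dY) (X \<times> Y) (sum_dist dX dY) T"
  shows "preserves_CX X dX Y T \<longleftrightarrow>
    (\<exists>h k. isometry_onto X dX X dX h \<and> isometry_onto Y dY Y dY k \<and>
       (\<forall>x\<in>X. \<forall>y\<in>Y. T (x, y) = (h x, k y)))"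
proof -
  interpret X: Metric_space X dX by fact
  interpret Y: Metric_space Y dY by fact
  have Tim: "T ` (X \<times> Y) = X \<times> Y"
    and Td: "\<And>p q. p \<in> X \<times> Y \<Longrightarrow> q \<in> X \<times> Y \<Longrightarrow> sum_dist dX dY (T p) (T q) = sum_dist dX dY p q"
    using assms(5) unfolding isometry_onto_def by blast+
  have TXY: "T (x, y) \<in> X \<times> Y" if "x \<in> X" "y \<in> Y" for x y using Tim that by blast
  show ?thesis
  proof
    assume P: "preserves_CX X dX Y T"
    have C1: "fst (T (x, y)) = fst (T (x, y'))" if xy: "x \<in> X" "y \<in> Y" "y' \<in> Y" for x y y'
    proof -
      define a where "a = fst (T (x, y))"
      have aX: "a \<in> X" using TXY xy unfolding a_def by (simp add: mem_Times_iff)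
      have a'X: "fst (T (x, y')) \<in> X" using TXY xy by (simp add: mem_Times_iff)
      define f where "f z = complex_of_real (dX a z)" for z
      have "continuous_map X.mtopology euclidean f"
        unfolding X.metric_continuous_map[OF Met_TC.Metric_space_axioms, simplified]
      proof (intro allI impI ballI)
        fix u e assume "u \<in> X" "(e::real) > 0"
        show "\<exists>\<delta>>0. \<forall>z. z \<in> X \<and> dX u z < \<delta> \<longrightarrow> dist (f u) (f z) < e"
        proof (intro exI[of _ e] conjI allI impI)
          fix z assume z: "z \<in> X \<and> dX u z < e"
          have "dist (f u) (f z) = \<bar>dX a u - dX a z\<bar>" unfolding f_def
            by (simp add: dist_norm flip: of_real_diff)
          also have "\<dots> \<le> dX u z" using X.triangle X.triangle' aX \<open>u \<in> X\<close> z X.commute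
            by (smt (verit))
          finally show "dist (f u) (f z) < e" using z by linarith
        qed (use \<open>e > 0\<close> in auto)
      qed
      then obtain g where g: "\<forall>x\<in>X. \<forall>y\<in>Y. f (fst (T (x, y))) = g x"
        using P unfolding preserves_CX_def by blast
      have "dX a a = dX a (fst (T (x, y')))"
        using g xy unfolding f_def a_def by (metis of_real_eq_iff)
      then show ?thesis using aX a'X X.zero unfolding a_def by simp
    qed
    show "\<exists>h k. isometry_onto X dX X dX h \<and> isometry_onto Y dY Y dY k \<and>
       (\<forall>x\<in>X. \<forall>y\<in>Y. T (x, y) = (h x, k y))"
    proof (cases "X = {} \<or> Y = {}")
      case True
      then show ?thesis by (intro exI[of _ id]) (auto simp: isometry_onto_def)
    next
      case False
      then obtain x0 y0 where x0: "x0 \<in> X" and y0: "y0 \<in> Y" by blast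
      define h where "h x = fst (T (x, y0))" for x
      define K where "K x y = snd (T (x, y))" for x y
      have TK: "T (x, y) = (h x, K x y)" if "x \<in> X" "y \<in> Y" for x y
        using C1[OF that y0] unfolding h_def K_def by (metis prod.collapse)
      have hX: "h x \<in> X" and KY: "K x y \<in> Y" if "x \<in> X" "y \<in> Y" for x y
        using TXY[OF that] TK[OF that] by auto
      have E: "dX (h x) (h x') + dY (K x y) (K x' y') = dX x x' + dY y y'"
        if "x \<in> X" "y \<in> Y" "x' \<in> X" "y' \<in> Y" for x y x' y'
        using Td[of "(x,y)" "(x',y')"] that TK by (simp add: sum_dist_def)
      have hX': "h x \<in> X" if "x \<in> X" for x using hX[OF that y0] .
      have Kiso: "dY (K x y) (K x y') = dY y y'" if "x \<in> X" "y \<in> Y" "y' \<in> Y" for x y y'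
        using E[of x y x y'] that hX' by simp
      have Konto: "K x ` Y = Y" if "x \<in> X" for x
        using self_isometry_onto[OF assms(3,4), of "K x"] KY Kiso that by blast
      have key: "K x' y = K x y \<and> dX (h x) (h x') = dX x x'"
        if x: "x \<in> X" "x' \<in> X" "y \<in> Y" for x x' y
      proof -
        obtain y' where y': "y' \<in> Y" "K x' y' = K x y"
          using Konto[OF x(2)] KY[OF x(1,3)] by (metis imageE)
        have e1: "dX (h x) (h x') = dX x x' + dY y y'"
          proof -
          have z: "dY (K x y) (K x y) = 0" using KY[OF x(1,3)] by simp
          show ?thesis using E[OF x(1,3) x(2) y'(1)] y'(2) z by simp
        qed
        have e2: "dX (h x) (h x') + dY (K x y) (K x' y) = dX x x'"
          using E[OF x(1,3) x(2) x(3)] x(3) by simp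
        have "dY (K x y) (K x' y) \<ge> 0" by simp
        hence "dY y y' = 0" using e1 e2 Y.nonneg[of y y'] by linarith
        hence "y = y'" using Y.zero x(3) y'(1) by blast
        thus ?thesis using y' e1 \<open>dY y y' = 0\<close> by simp
      qed
      show ?thesis
      proof (intro exI[of _ h] exI[of _ "K x0"] conjI ballI)
        show "isometry_onto X dX X dX h"
          unfolding isometry_onto_def
        proof (intro conjI ballI)
          show "h ` X = X"
          proof
            show "h ` X \<subseteq> X" using hX' by blast
            show "X \<subseteq> h ` X"
            proof
              fix a assume "a \<in> X"
              then have "(a, y0) \<in> T ` (X \<times> Y)" using Tim y0 by blast
              then obtain x y where "x \<in> X" "y \<in> Y" "T (x, y) = (a, y0)" by auto
              then show "a \<in> h ` X" using TK by auto
            qed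
          qed
        next
          fix x x' assume "x \<in> X" "x' \<in> X"
          then show "dX (h x) (h x') = dX x x'" using key y0 by blast
        qed
        show "isometry_onto Y dY Y dY (K x0)"
          unfolding isometry_onto_def using Konto[OF x0] Kiso[OF x0] by blast
        fix x y assume "x \<in> X" "y \<in> Y"
        then show "T (x, y) = (h x, K x0 y)" using TK key x0 by metis
      qed
    qed
  next
    assume "\<exists>h k. isometry_onto X dX X dX h \<and> isometry_onto Y dY Y dY k \<and>
       (\<forall>x\<in>X. \<forall>y\<in>Y. T (x, y) = (h x, k y))"
    then obtain h k where h: "isometry_onto X dX X dX h"
      and Th: "\<forall>x\<in>X. \<forall>y\<in>Y. T (x, y) = (h x, k y)" by blast
    have hc: "continuous_map X.mtopology X.mtopology h"
      unfolding X.metric_continuous_map[OF assms(1)]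
      using h unfolding isometry_onto_def by (metis order_refl)
    show "preserves_CX X dX Y T"
      unfolding preserves_CX_def
    proof (intro allI impI)
      fix f :: "'a \<Rightarrow> complex" assume "continuous_map X.mtopology euclidean f"
      then have "continuous_map X.mtopology euclidean (f \<circ> h)"
        using hc continuous_map_compose by blast
      then show "\<exists>g. continuous_map X.mtopology euclidean g \<and>
           (\<forall>x\<in>X. \<forall>y\<in>Y. f (fst (T (x, y))) = g x)"
        using Th by (intro exI[of _ "f \<circ> h"]) auto
    qed
  qed
qed

end
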